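(* Consider the delayed online learning protocol described in the context, and assume that delayed dual averaging (DDA) is run with a non-increasing sequence of learning rates $(\eta_t)_{t\in\{1,\dots,T\}}$, $\eta_t>0$. Then for every $p\in\mathcal X$ the generated points $x_1,\dots,x_T$ satisfy \[ R_T(p)\le \frac{h(p)}{\eta_T}+\frac12\sum_{t=1}^T \eta_t\Big(\|g_t\|_*^2+2\|g_t\|_*\sum_{s\in\mathcal U_t}\|g_s\|_*\Big). \]
   Context: Let $\mathcal V$ be a finite-dimensional real vector space with norm $\|\cdot\|$ and dual norm $\|\cdot\|_*$, and let $\mathcal X\subset\mathcal V$ be closed and convex. A regularizer is a function $h:\mathcal V\to\mathbb R\cup\{+\infty\}$ that is lower semicontinuous, $1$-strongly convex with respect to $\|\cdot\|$ on $\mathcal X$, satisfies $\mathcal X\subset\operatorname{dom}h$, whose subdifferential admits a continuous selection, and which is nonnegative ($h\ge0$). Protocol: there are one or several agents; at each round $t=1,\dots,T$ exactly one agent $i(t)$ is active, plays $x_t\in\mathcal X$ and incurs $f_t(x_t)$, where $f_t:\mathcal V\to\mathbb R\cup\{+\infty\}$ is convex with $\mathcal X\subset\operatorname{dom}\partial f_t$; a subgradient $g_t\in\partial f_t(x_t)$ is revealed at some later moment (possibly at different times to different agents). For an agent $i$ and time $t$, $\mathcal S^i_t\subset\{1,\dots,t-1\}$ is the set of timestamps $s$ such that $g_s$ is available to agent $i$ at time $t$, with $\mathcal S^i_t\subset\mathcal S^i_{t+1}$. Set $\mathcal S_t=\mathcal S^{i(t)}_t$ and $\mathcal U_t=\{1,\dots,t-1\}\setminus\mathcal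 S_t$. DDA: $x_t=\arg\min_{x\in\mathcal X}\big\{\sum_{s\in\mathcal S_t}\langle g_s,x\rangle+h(x)/\eta_t\big\}$. Regret: $R_T(p)=\sum_{t=1}^Tf_t(x_t)-\sum_{t=1}^Tf_t(p)$. *)

theory Defs
  imports "HOL-Analysis.Analysis"
begin

text \<open>The finite-dimensional real vector space V is modelled by a type of class
euclidean_space; its (arbitrary) norm is a function N; the pairing of a
gradient g with a point x is the inner product g \<bullet> x (identifying V* with V).
Extended-real-valued functions V \<rightarrow> R \<union> {+\<infinity>} are functions into ereal that
never take the value -\<infinity>.\<close>

definition is_norm :: "('a::real_vector \<Rightarrow> real) \<Rightarrow> bool" where
  "is_norm N \<longleftrightarrow> (\<forall>x. N x \<ge> 0) \<and> (\<forall>x. N x = 0 \<longleftrightarrow> x = 0)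
     \<and> (\<forall>c x. N (c *\<^sub>R x) = \<bar>c\<bar> * N x) \<and> (\<forall>x y. N (x + y) \<le> N x + N y)"

definition dual_norm :: "('a::real_inner \<Rightarrow> real) \<Rightarrow> 'a \<Rightarrow> real" where
  "dual_norm N g = Sup {g \<bullet> x | x. N x \<le> 1}"

definition ext_valued :: "('a \<Rightarrow> ereal) \<Rightarrow> bool" where
  "ext_valued f \<longleftrightarrow> (\<forall>x. f x \<noteq> -\<infinity>)"

definition edom :: "('a \<Rightarrow> ereal) \<Rightarrow> 'a set" where
  "edom f = {x. f x < \<infinity>}"

definition lower_semicont :: "('a::topological_space \<Rightarrow> ereal) \<Rightarrow> bool" where
  "lower_semicont f \<longleftrightarrow> (\<forall>x. f x \<le> Liminf (at x) f)"

definition econvex :: "('a::real_vector \<Rightarrow> ereal) \<Rightarrow> bool" where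
  "econvex f \<longleftrightarrow> (\<forall>x y u. 0 \<le> u \<and> u \<le> 1 \<longrightarrow>
      f (u *\<^sub>R x + (1 - u) *\<^sub>R y) \<le> ereal u * f x + ereal (1 - u) * f y)"

definition strongly_convex_on :: "'a set \<Rightarrow> ('a::real_vector \<Rightarrow> real) \<Rightarrow> ('a \<Rightarrow> ereal) \<Rightarrow> bool" where
  "strongly_convex_on X N f \<longleftrightarrow> (\<forall>x\<in>X. \<forall>y\<in>X. \<forall>u. 0 \<le> u \<and> u \<le> 1 \<longrightarrow>
      f (u *\<^sub>R x + (1 - u) *\<^sub>R y)
        \<le> ereal u * f x + ereal (1 - u) * f y - ereal (u * (1 - u) / 2 * (N (x - y))\<^sup>2))"

definition subdiff :: "('a::real_inner \<Rightarrow> ereal) \<Rightarrow> 'a \<Rightarrow> 'a set" where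
  "subdiff f x = {g. \<bar>f x\<bar> \<noteq> \<infinity> \<and> (\<forall>y. f x + ereal (g \<bullet> (y - x)) \<le> f y)}"

definition regularizer :: "'a set \<Rightarrow> ('a::euclidean_space \<Rightarrow> real) \<Rightarrow> ('a \<Rightarrow> ereal) \<Rightarrow> bool" where
  "regularizer X N h \<longleftrightarrow> ext_valued h \<and> lower_semicont h \<and> strongly_convex_on X N h
     \<and> X \<subseteq> edom h
     \<and> (\<exists>s. continuous_on {x. subdiff h x \<noteq> {}} s \<and> (\<forall>x. subdiff h x \<noteq> {} \<longrightarrow> s x \<in> subdiff h x))
     \<and> (\<forall>x. h x \<ge> 0)"

end

theory Submission
  imports Defs
begin


lemma isn: assumes "is_norm N"
  shows "N x \<ge> 0" "N x = 0 \<longleftrightarrow> x = 0" "N (c *\<^sub>R x) = \<bar>c\<bar> * N x" "N (x + y) \<le> N x + N y"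
  using assms unfolding is_norm_def by auto

lemma N_minus: assumes "is_norm N" shows "N (x - y) = N (y - x)"
proof -
  have "N (y - x) = N ((-1) *\<^sub>R (x - y))" by simp
  also have "\<dots> = N (x - y)" using isn(3)[OF assms, of "-1" "x - y"] by simp
  finally show ?thesis by simp
qed

lemma N_sum: assumes "is_norm N" "finite A" shows "N (\<Sum>i\<in>A. f i) \<le> (\<Sum>i\<in>A. N (f i))"
  using assms(2)
proof (induction A rule: finite_induct)
  case empty then show ?case using isn(2)[OF assms(1), of 0] by simp
next
  case (insert a A)
  then show ?case using isn(4)[OF assms(1), of "f a" "sum f A"] by simp
qed

lemma N_upper: fixes N :: "'a::euclidean_space \<Rightarrow> real" assumes "is_norm N"
  shows "N x \<le> (\<Sum>b\<in>Basis. N b) * norm x"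
proof -
  have "N x = N (\<Sum>b\<in>Basis. (x \<bullet> b) *\<^sub>R b)" by (simp add: euclidean_representation)
  also have "\<dots> \<le> (\<Sum>b\<in>Basis. N ((x \<bullet> b) *\<^sub>R b))" by (rule N_sum[OF assms]) simp
  also have "\<dots> = (\<Sum>b\<in>Basis. \<bar>x \<bullet> b\<bar> * N b)" using isn(3)[OF assms] by simp
  also have "\<dots> \<le> (\<Sum>b\<in>Basis. norm x * N b)"
    by (rule sum_mono) (simp add: Basis_le_norm isn(1)[OF assms] mult_right_mono)
  finally show ?thesis by (simp add: sum_distrib_left mult.commute)
qed

lemma N_cont: fixes N :: "'a::euclidean_space \<Rightarrow> real" assumes "is_norm N"
  shows "continuous_on S N"
proof -
  define C where "C = (\<Sum>b\<in>Basis. N b) + 1"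
  have C: "C > 0" unfolding C_def using isn(1)[OF assms] by (simp add: add_nonneg_pos sum_nonneg)
  have L: "\<bar>N x - N y\<bar> \<le> C * norm (x - y)" for x y
  proof -
    have a: "N x \<le> N y + N (x - y)" using isn(4)[OF assms, of y "x - y"] by simp
    have b: "N y \<le> N x + N (x - y)" using isn(4)[OF assms, of x "y - x"] N_minus[OF assms, of x y] by simp
    have "N (x - y) \<le> C * norm (x - y)" using N_upper[OF assms, of "x - y"] unfolding C_def
      by (simp add: distrib_right) (smt (verit) norm_ge_zero)
    then show ?thesis using a b by linarith
  qed
  show ?thesis unfolding continuous_on_iff
  proof (intro ballI allI impI)
    fix x e assume "x \<in> S" "(e::real) > 0"
    show "\<exists>d>0. \<forall>x'\<in>S. dist x' x < d \<longrightarrow> dist (N x') (N x) < e"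
    proof (intro exI[of _ "e / C"] conjI ballI impI)
      show "e / C > 0" using C \<open>e > 0\<close> by simp
      fix x' assume "dist x' x < e / C"
      then have "C * norm (x' - x) < e" using C by (simp add: dist_norm field_simps)
      then show "dist (N x') (N x) < e" using L[of x' x] by (simp add: dist_real_def)
    qed
  qed
qed

lemma N_lower: fixes N :: "'a::euclidean_space \<Rightarrow> real" assumes "is_norm N"
  shows "\<exists>c>0. \<forall>x. c * norm x \<le> N x"
proof -
  obtain b :: 'a where b: "b \<in> Basis" using nonempty_Basis by blast
  have ne: "sphere (0::'a) 1 \<noteq> {}" using b by (auto simp: norm_Basis)
  obtain x0 where x0: "x0 \<in> sphere 0 1" "\<forall>y\<in>sphere 0 1. N x0 \<le> N y"
    using continuous_attains_inf[OF compact_sphere ne N_cont[OF assms]] by blast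
  have c: "N x0 > 0" using x0(1) isn(1,2)[OF assms, of x0] by auto
  show ?thesis
  proof (intro exI[of _ "N x0"] conjI allI)
    show "N x0 > 0" by fact
    fix x :: 'a
    show "N x0 * norm x \<le> N x"
    proof (cases "x = 0")
      case True then show ?thesis using isn(1)[OF assms] by simp
    next
      case False
      have "N x0 \<le> N (inverse (norm x) *\<^sub>R x)" using x0(2) False by simp
      also have "\<dots> = inverse (norm x) * N x" using isn(3)[OF assms] by simp
      finally show ?thesis using False by (simp add: field_simps)
    qed
  qed
qed

lemma dual_bound: fixes N :: "'a::euclidean_space \<Rightarrow> real" assumes "is_norm N"
  shows "g \<bullet> w \<le> dual_norm N g * N w" "dual_norm N g \<ge> 0"
proof -
  obtain c where c: "c > 0" "\<And>x. c * norm x \<le> N x" using N_lower[OF assms] by blast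
  have bdd: "bdd_above {g \<bullet> x | x. N x \<le> 1}"
  proof (rule bdd_aboveI[of _ "norm g / c"])
    fix y assume "y \<in> {g \<bullet> x | x. N x \<le> 1}"
    then obtain x where x: "y = g \<bullet> x" "N x \<le> 1" by blast
    have "norm x \<le> 1 / c" using c(2)[of x] x(2) c(1) by (simp add: field_simps)
    have "y \<le> norm g * norm x" using x(1) norm_cauchy_schwarz by blast
    also have "\<dots> \<le> norm g * (1 / c)" by (rule mult_left_mono) (use \<open>norm x \<le> 1 / c\<close> in auto)
    finally show "y \<le> norm g / c" by simp
  qed
  have up: "g \<bullet> x \<le> dual_norm N g" if "N x \<le> 1" for x
    unfolding dual_norm_def by (rule cSup_upper[OF _ bdd]) (use that in blast)
  show "dual_norm N g \<ge> 0" using up[of 0] isn(2)[OF assms, of 0] by simp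
  show "g \<bullet> w \<le> dual_norm N g * N w"
  proof (cases "w = 0")
    case True then show ?thesis using isn(2)[OF assms, of 0] by simp
  next
    case False
    then have Np: "N w > 0" using isn(1,2)[OF assms, of w] by auto
    have "N (inverse (N w) *\<^sub>R w) = 1" using isn(3)[OF assms] Np by simp
    then have "g \<bullet> (inverse (N w) *\<^sub>R w) \<le> dual_norm N g" using up by (metis order_refl)
    then have "inverse (N w) * (g \<bullet> w) \<le> dual_norm N g" by (simp only: inner_scaleR_right)
    then show ?thesis using Np by (simp add: field_simps)
  qed
qed



definition scv :: "'a set \<Rightarrow> ('a::real_vector \<Rightarrow> real) \<Rightarrow> ('a \<Rightarrow> real) \<Rightarrow> bool" where
  "scv X N H \<longleftrightarrow> (\<forall>x\<in>X. \<forall>y\<in>X. \<forall>u. 0 \<le> u \<and> u \<le> 1 \<longrightarrow>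
     H (u *\<^sub>R x + (1-u) *\<^sub>R y) \<le> u * H x + (1-u) * H y - u*(1-u)/2 * (N (x-y))\<^sup>2)"

lemma scv_F:
  fixes a :: "'a::real_inner"
  assumes "scv X N H" "\<eta> > 0" "x \<in> X" "y \<in> X" "0 \<le> u" "u \<le> 1"
  shows "a \<bullet> (u *\<^sub>R x + (1-u) *\<^sub>R y) + H (u *\<^sub>R x + (1-u) *\<^sub>R y) / \<eta>
     \<le> u * (a \<bullet> x + H x / \<eta>) + (1-u) * (a \<bullet> y + H y / \<eta>) - u*(1-u) * (N (x-y))\<^sup>2 / (2*\<eta>)"
proof -
  have h: "H (u *\<^sub>R x + (1-u) *\<^sub>R y) \<le> u * H x + (1-u) * H y - u*(1-u)/2 * (N (x-y))\<^sup>2"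
    using assms unfolding scv_def by blast
  have "H (u *\<^sub>R x + (1-u) *\<^sub>R y) / \<eta> \<le> (u * H x + (1-u) * H y - u*(1-u)/2 * (N (x-y))\<^sup>2) / \<eta>"
    using h assms(2) by (simp add: divide_right_mono)
  also have "\<dots> = u * (H x / \<eta>) + (1-u) * (H y / \<eta>) - u*(1-u) * (N (x-y))\<^sup>2 / (2*\<eta>)"
    using assms(2) by (simp add: field_simps)
  finally show ?thesis by (simp add: inner_add_right algebra_simps)
qed

lemma min_quad:
  fixes a :: "'a::real_inner"
  assumes X: "convex X" and sc: "scv X N H" and eta: "\<eta> > 0" and y: "y \<in> X"
    and mn: "\<forall>w\<in>X. a \<bullet> y + H y / \<eta> \<le> a \<bullet> w + H w / \<eta>" and z: "z \<in> X"
  shows "a \<bullet> y + H y / \<eta> + (N (z-y))\<^sup>2 / (2*\<eta>) \<le> a \<bullet> z + H z / \<eta>"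
proof -
  define F where "F w = a \<bullet> w + H w / \<eta>" for w
  define Q where "Q = (N (z-y))\<^sup>2 / (2*\<eta>)"
  have Q0: "Q \<ge> 0" unfolding Q_def using eta by simp
  have key: "F y \<le> F z - (1-u) * Q" if u: "0 < u" "u \<le> 1" for u
  proof -
    have w: "u *\<^sub>R z + (1-u) *\<^sub>R y \<in> X" using X z y u unfolding convex_def by auto
    have "F y \<le> F (u *\<^sub>R z + (1-u) *\<^sub>R y)" using mn w unfolding F_def by blast
    also have "\<dots> \<le> u * F z + (1-u) * F y - u*(1-u) * Q"
      using scv_F[OF sc eta z y, of u a] u unfolding F_def Q_def by (simp add: field_simps)
    finally have "u * F y \<le> u * (F z - (1-u) * Q)" by (simp add: algebra_simps)
    then show ?thesis using u by simp
  qed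
  have "F y \<le> F z - Q"
  proof (rule ccontr)
    assume "\<not> ?thesis"
    then have e: "F y - (F z - Q) > 0" by simp
    show False
    proof (cases "Q = 0")
      case True then show False using key[of 1] e by simp
    next
      case False
      then have Qp: "Q > 0" using Q0 by simp
      define u where "u = min 1 ((F y - (F z - Q)) / (2*Q))"
      have u: "0 < u" "u \<le> 1" using e Qp unfolding u_def by auto
      have "u * Q \<le> (F y - (F z - Q)) / 2"
        using Qp unfolding u_def by (simp add: min_def field_simps)
      then show False using key[OF u] e by (simp add: algebra_simps)
    qed
  qed
  then show ?thesis unfolding F_def Q_def by simp
qed

lemma stab:
  fixes a b :: "'a::real_inner"
  assumes X: "convex X" and sc: "scv X N H" and eta: "\<eta> > 0" and nrm: "is_norm N"
    and x: "x \<in> X" and mx: "\<forall>w\<in>X. b \<bullet> x + H x / \<eta> \<le> b \<bullet> w + H w / \<eta>"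
    and y: "y \<in> X" and my: "\<forall>w\<in>X. (b + a) \<bullet> y + H y / \<eta> \<le> (b + a) \<bullet> w + H w / \<eta>"
    and K: "\<And>v. a \<bullet> v \<le> K * N v" "K \<ge> 0"
  shows "N (x - y) \<le> \<eta> * K"
proof -
  have 1: "b \<bullet> x + H x / \<eta> + (N (y-x))\<^sup>2 / (2*\<eta>) \<le> b \<bullet> y + H y / \<eta>"
    by (rule min_quad[OF X sc eta x mx y])
  have 2: "(b + a) \<bullet> y + H y / \<eta> + (N (x-y))\<^sup>2 / (2*\<eta>) \<le> (b + a) \<bullet> x + H x / \<eta>"
    by (rule min_quad[OF X sc eta y my x])
  have s: "N (y - x) = N (x - y)" using N_minus[OF nrm] by simp
  have "(N (x-y))\<^sup>2 / \<eta> \<le> a \<bullet> (x - y)" using 1 2 s by (simp add: inner_add_left inner_diff_right field_simps)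
  also have "\<dots> \<le> K * N (x - y)" by (rule K)
  finally have 3: "(N (x-y))\<^sup>2 / \<eta> \<le> K * N (x - y)" .
  show ?thesis
  proof (cases "N (x - y) = 0")
    case True then show ?thesis using K(2) eta by simp
  next
    case False
    then have p: "N (x - y) > 0" using isn(1)[OF nrm, of "x-y"] by simp
    from 3 have "N (x-y) * N (x - y) \<le> (\<eta> * K) * N (x - y)" using eta
      by (simp add: power2_eq_square field_simps)
    then show ?thesis using p by simp
  qed
qed



lemma exist_min:
  fixes a :: "'a::euclidean_space"
  assumes X: "convex X" "closed X" "X \<noteq> {}" and sc: "scv X N H" and eta: "\<eta> > 0"
    and c: "c > 0" "\<And>x. c * norm x \<le> N x"
    and lsc: "\<And>z r. z \<in> X \<Longrightarrow> r < H z \<Longrightarrow> \<exists>d>0. \<forall>y\<in>X. dist y z < d \<longrightarrow> r < H y"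
    and bdd: "\<And>w. w \<in> X \<Longrightarrow> L \<le> a \<bullet> w + H w / \<eta>"
  shows "\<exists>y\<in>X. \<forall>w\<in>X. a \<bullet> y + H y / \<eta> \<le> a \<bullet> w + H w / \<eta>"
proof -
  define F where "F w = a \<bullet> w + H w / \<eta>" for w
  define m where "m = Inf (F ` X)"
  have bb: "bdd_below (F ` X)" unfolding F_def by (rule bdd_belowI[of _ L]) (use bdd in auto)
  have mle: "m \<le> F w" if "w \<in> X" for w unfolding m_def using bb that by (simp add: cInf_lower)
  have "\<forall>k. \<exists>z\<in>X. F z < m + inverse (real (Suc k))"
  proof
    fix k
    have "Inf (F ` X) < m + inverse (real (Suc k))" unfolding m_def by simp
    then show "\<exists>z\<in>X. F z < m + inverse (real (Suc k))" using cInf_lessD[of "F ` X"] X(3) by auto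
  qed
  then obtain z where z: "\<And>k. z k \<in> X" "\<And>k. F (z k) < m + inverse (real (Suc k))"
    by metis
  have dist_bound: "(c * norm (z j - z k))\<^sup>2 \<le> 8 * \<eta> * inverse (real (Suc M))"
    if "j \<ge> M" "k \<ge> M" for j k M
  proof -
    have mid: "(1/2) *\<^sub>R z j + (1 - 1/2) *\<^sub>R z k \<in> X"
      using X(1) z(1)[of j] z(1)[of k] unfolding convex_def by (intro convexD[OF X(1) z(1) z(1)]) auto
    have 1: "F ((1/2) *\<^sub>R z j + (1 - 1/2) *\<^sub>R z k) \<le> (1/2) * F (z j) + (1 - 1/2) * F (z k)
        - (1/2)*(1-1/2) * (N (z j - z k))\<^sup>2 / (2*\<eta>)"
      using scv_F[OF sc eta z(1) z(1), of "1/2" a] unfolding F_def by simp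
    have 2: "m \<le> F ((1/2) *\<^sub>R z j + (1 - 1/2) *\<^sub>R z k)" using mle mid by blast
    have ij: "inverse (real (Suc j)) \<le> inverse (real (Suc M))" "inverse (real (Suc k)) \<le> inverse (real (Suc M))"
      using that by (auto simp: field_simps)
    have "(N (z j - z k))\<^sup>2 \<le> 8 * \<eta> * inverse (real (Suc M))"
    proof -
      have "(N (z j - z k))\<^sup>2 / (8*\<eta>) \<le> inverse (real (Suc M))"
      proof -
        have e: "(1/2)*(1-1/2) * (N (z j - z k))\<^sup>2 / (2*\<eta>) = (N (z j - z k))\<^sup>2 / (8*\<eta>)" by simp
        show ?thesis using 1 2 z(2)[of j] z(2)[of k] ij unfolding e by argo
      qed
      then show ?thesis using eta by (simp add: field_simps)
    qed
    moreover have "(c * norm (z j - z k))\<^sup>2 \<le> (N (z j - z k))\<^sup>2"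
      using c by (intro power_mono) auto
    ultimately show ?thesis by linarith
  qed
  have "Cauchy z"
    unfolding Cauchy_def
  proof (intro allI impI)
    fix e :: real assume e: "e > 0"
    have ce: "(c * e)\<^sup>2 / (8 * \<eta>) > 0" using c(1) e eta by simp
    obtain M where M: "inverse (real (Suc M)) < (c * e)\<^sup>2 / (8 * \<eta>)"
      using reals_Archimedean[OF ce] by blast
    have M': "8 * \<eta> * inverse (real (Suc M)) < (c * e)\<^sup>2"
      using M eta by (simp add: pos_less_divide_eq mult.commute)
    show "\<exists>M. \<forall>j\<ge>M. \<forall>k\<ge>M. dist (z j) (z k) < e"
    proof (rule exI[of _ M], intro allI impI)
      fix j k assume jk: "j \<ge> M" "k \<ge> M"
      have sq: "(c * norm (z j - z k))\<^sup>2 < (c * e)\<^sup>2"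
        using dist_bound[OF jk] M' by linarith
      have "c * norm (z j - z k) < c * e"
        by (rule power2_less_imp_less[OF sq]) (use c(1) e in simp)
      then have "norm (z j - z k) < e" using c(1) by simp
      then show "dist (z j) (z k) < e" by (simp add: dist_norm)
    qed
  qed
  then obtain z0 where lim: "z \<longlonglongrightarrow> z0" using Cauchy_convergent_iff convergent_def by blast
  have z0: "z0 \<in> X" using closed_sequentially[OF X(2)] z(1) lim by blast
  have Fl: "(\<lambda>k. F (z k)) \<longlonglongrightarrow> m"
  proof (rule tendsto_sandwich[of "\<lambda>_. m" _ _ "\<lambda>k. m + inverse (real (Suc k))"])
    show "\<forall>\<^sub>F n in sequentially. m \<le> F (z n)" using mle z(1) by simp
    show "\<forall>\<^sub>F n in sequentially. F (z n) \<le> m + inverse (real (Suc n))" using z(2) by (simp add: less_imp_le)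
    show "(\<lambda>n. m) \<longlonglongrightarrow> m" by simp
    show "(\<lambda>n. m + inverse (real (Suc n))) \<longlonglongrightarrow> m"
      using tendsto_add[OF tendsto_const[of m] LIMSEQ_inverse_real_of_nat] by simp
  qed
  have Hl: "(\<lambda>k. H (z k)) \<longlonglongrightarrow> \<eta> * (m - a \<bullet> z0)"
  proof -
    have "(\<lambda>k. \<eta> * (F (z k) - a \<bullet> z k)) \<longlonglongrightarrow> \<eta> * (m - a \<bullet> z0)"
      by (intro tendsto_intros Fl lim)
    moreover have "\<eta> * (F (z k) - a \<bullet> z k) = H (z k)" for k using eta unfolding F_def by simp
    ultimately show ?thesis by simp
  qed
  have "H z0 \<le> \<eta> * (m - a \<bullet> z0)"
  proof (rule dense_le)
    fix r assume r: "r < H z0"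
    obtain d where d: "d > 0" "\<forall>y\<in>X. dist y z0 < d \<longrightarrow> r < H y" using lsc[OF z0 r] by blast
    have "eventually (\<lambda>k. dist (z k) z0 < d) sequentially" using tendstoD[OF lim d(1)] .
    then have "eventually (\<lambda>k. r \<le> H (z k)) sequentially"
      by eventually_elim (use d z(1) in force)
    then show "r \<le> \<eta> * (m - a \<bullet> z0)" using tendsto_lowerbound[OF Hl] by simp
  qed
  then have "F z0 \<le> m" using eta unfolding F_def by (simp add: field_simps)
  then have "\<forall>w\<in>X. F z0 \<le> F w" using mle by (meson order_trans)
  then show ?thesis using z0 unfolding F_def by blast
qed



lemma bdd_lemma:
  fixes a b :: "'a::euclidean_space"
  assumes X: "convex X" and sc: "scv X N H" and eta: "\<eta> > 0" and nrm: "is_norm N"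
    and x: "x \<in> X" and mx: "\<forall>w\<in>X. b \<bullet> x + H x / \<eta> \<le> b \<bullet> w + H w / \<eta>" and w: "w \<in> X"
  shows "b \<bullet> x + H x / \<eta> + a \<bullet> x - \<eta> * (dual_norm N a)\<^sup>2 / 2 \<le> (b + a) \<bullet> w + H w / \<eta>"
proof -
  define r where "r = N (w - x)"
  define K where "K = dual_norm N a"
  have 1: "b \<bullet> x + H x / \<eta> + r\<^sup>2 / (2*\<eta>) \<le> b \<bullet> w + H w / \<eta>"
    unfolding r_def by (rule min_quad[OF X sc eta x mx w])
  have 2: "a \<bullet> (x - w) \<le> K * r" unfolding K_def r_def
    using dual_bound(1)[OF nrm, of a "x - w"] N_minus[OF nrm, of x w] by simp
  have 3: "0 \<le> (r - \<eta> * K)\<^sup>2 / (2*\<eta>)" using eta by simp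
  have 4: "(r - \<eta> * K)\<^sup>2 / (2*\<eta>) = r\<^sup>2 / (2*\<eta>) - K * r + \<eta> * K\<^sup>2 / 2"
    using eta by (simp add: power2_eq_square field_simps)
  show ?thesis using 1 2 3 4 unfolding K_def[symmetric] by (simp add: inner_add_left inner_diff_right)
qed

theorem theorem1:
  fixes N :: "'a::euclidean_space \<Rightarrow> real"
    and X :: "'a set"
    and h :: "'a \<Rightarrow> ereal"
    and f :: "nat \<Rightarrow> 'a \<Rightarrow> ereal"
    and ag :: "nat \<Rightarrow> 'agent"
    and S :: "'agent \<Rightarrow> nat \<Rightarrow> nat set"
    and x g :: "nat \<Rightarrow> 'a"
    and \<eta> :: "nat \<Rightarrow> real"
    and T :: nat
    and p :: 'a
  assumes norm: "is_norm N"
    and X: "closed X" "convex X"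
    and reg: "regularizer X N h"
    and f_ext: "\<And>t. t \<in> {1..T} \<Longrightarrow> ext_valued (f t)"
    and f_convex: "\<And>t. t \<in> {1..T} \<Longrightarrow> econvex (f t)"
    and f_dom: "\<And>t. t \<in> {1..T} \<Longrightarrow> X \<subseteq> {y. subdiff (f t) y \<noteq> {}}"
    and S_past: "\<And>a t. S a t \<subseteq> {1..<t}"
    and S_mono: "\<And>a t. S a t \<subseteq> S a (Suc t)"
    and eta_pos: "\<And>t. t \<in> {1..T} \<Longrightarrow> \<eta> t > 0"
    and eta_mono: "\<And>s t. s \<in> {1..T} \<Longrightarrow> t \<in> {1..T} \<Longrightarrow> s \<le> t \<Longrightarrow> \<eta> t \<le> \<eta> s"
    and x_in: "\<And>t. t \<in> {1..T} \<Longrightarrow> x t \<in> X"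
    and x_dda: "\<And>t y. t \<in> {1..T} \<Longrightarrow> y \<in> X \<Longrightarrow>
        ereal (\<Sum>s\<in>S (ag t) t. g s \<bullet> x t) + h (x t) / ereal (\<eta> t)
          \<le> ereal (\<Sum>s\<in>S (ag t) t. g s \<bullet> y) + h y / ereal (\<eta> t)"
    and g_sub: "\<And>t. t \<in> {1..T} \<Longrightarrow> g t \<in> subdiff (f t) (x t)"
    and T: "T \<ge> 1"
    and p: "p \<in> X"
  shows "(\<Sum>t=1..T. f t (x t)) - (\<Sum>t=1..T. f t p)
     \<le> h p / ereal (\<eta> T)
        + ereal (1/2 * (\<Sum>t=1..T. \<eta> t * ((dual_norm N (g t))\<^sup>2
             + 2 * dual_norm N (g t) * (\<Sum>s\<in>{1..<t} - S (ag t) t. dual_norm N (g s)))))"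
proof -
  obtain c where c: "c > 0" "\<And>x. c * norm x \<le> N x" using N_lower[OF norm] by blast
  define dn where "dn v = dual_norm N v" for v
  have dnb: "v \<bullet> w \<le> dn v * N w" "dn v \<ge> 0" for v w unfolding dn_def using dual_bound[OF norm] by auto
  from reg have h_ext: "ext_valued h" and h_lsc: "lower_semicont h" and h_sc: "strongly_convex_on X N h"
    and h_dom: "X \<subseteq> edom h" and h_nn: "\<And>x. h x \<ge> 0"
    unfolding regularizer_def by auto
  define H where "H x = real_of_ereal (h x)" for x
  have hH: "h x = ereal (H x)" if "x \<in> X" for x
  proof -
    have "h x < \<infinity>" using h_dom that unfolding edom_def by auto
    moreover have "h x \<ge> 0" by (rule h_nn)
    ultimately have "\<bar>h x\<bar> \<noteq> \<infinity>" by auto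
    then show ?thesis unfolding H_def by (simp add: ereal_real')
  qed
  have Hnn: "H x \<ge> 0" for x unfolding H_def using h_nn by (simp add: real_of_ereal_pos)
  have sc: "scv X N H" unfolding scv_def
  proof (intro ballI allI impI)
    fix x y and u :: real assume xy: "x \<in> X" "y \<in> X" and u: "0 \<le> u \<and> u \<le> 1"
    have w: "u *\<^sub>R x + (1-u) *\<^sub>R y \<in> X" using convexD[OF X(2) xy, of u "1-u"] u by auto
    have "h (u *\<^sub>R x + (1 - u) *\<^sub>R y)
        \<le> ereal u * h x + ereal (1 - u) * h y - ereal (u * (1 - u) / 2 * (N (x - y))\<^sup>2)"
      using h_sc xy u unfolding strongly_convex_on_def by blast
    then show "H (u *\<^sub>R x + (1-u) *\<^sub>R y) \<le> u * H x + (1-u) * H y - u*(1-u)/2 * (N (x-y))\<^sup>2"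
      unfolding hH[OF w] hH[OF xy(1)] hH[OF xy(2)] by simp
  qed
  have lsc: "\<exists>d>0. \<forall>y\<in>X. dist y z < d \<longrightarrow> r < H y" if z: "z \<in> X" and r: "r < H z" for z r
  proof -
    have r': "ereal r < h z" using r hH[OF z] by simp
    have "h z \<le> Liminf (at z) h" using h_lsc unfolding lower_semicont_def by blast
    then have "eventually (\<lambda>y. ereal r < h y) (at z)" using le_Liminf_iff[of "h z" "at z" h] r' by blast
    then obtain d where d: "d > 0" "\<forall>y. y \<noteq> z \<and> dist y z < d \<longrightarrow> ereal r < h y"
      unfolding eventually_at by auto
    show ?thesis
    proof (intro exI[of _ d] conjI ballI impI)
      fix y assume "y \<in> X" "dist y z < d"
      then show "r < H y" using d(2) hH r by (cases "y = z") auto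
    qed (use d in auto)
  qed
  define GS where "GS t = (\<Sum>s\<in>S (ag t) t. g s)" for t
  define U where "U t = {1..<t} - S (ag t) t" for t
  define D where "D t = (\<Sum>s\<in>U t. g s)" for t
  define G where "G t = (\<Sum>s\<in>{1..<t}. g s)" for t
  define e where "e t = \<eta> (min t T)" for t
  have GD: "G t = GS t + D t" for t
    unfolding G_def GS_def D_def U_def using sum.subset_diff[OF S_past[of "ag t" t], of g] by simp
  have e_pos: "e t > 0" if "t \<ge> 1" for t unfolding e_def using eta_pos that T by simp
  have xmin: "\<forall>w\<in>X. GS t \<bullet> x t + H (x t) / \<eta> t \<le> GS t \<bullet> w + H w / \<eta> t" if t: "t \<in> {1..T}" for t
  proof
    fix w assume w: "w \<in> X"
    have "ereal (\<Sum>s\<in>S (ag t) t. g s \<bullet> x t) + h (x t) / ereal (\<eta> t)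
          \<le> ereal (\<Sum>s\<in>S (ag t) t. g s \<bullet> w) + h w / ereal (\<eta> t)" by (rule x_dda[OF t w])
    then show "GS t \<bullet> x t + H (x t) / \<eta> t \<le> GS t \<bullet> w + H w / \<eta> t"
      unfolding hH[OF w] hH[OF x_in[OF t]] GS_def using eta_pos[OF t] by (simp add: inner_sum_left)
  qed
  have "\<forall>t\<in>{1..Suc T}. \<exists>y\<in>X. \<forall>w\<in>X. G t \<bullet> y + H y / e t \<le> G t \<bullet> w + H w / e t"
  proof
    fix t assume t: "t \<in> {1..Suc T}"
    define t' where "t' = min t T"
    have t': "t' \<in> {1..T}" using t T unfolding t'_def by auto
    have et: "e t = \<eta> t'" unfolding e_def t'_def by simp
    have Gt: "G t = GS t' + (G t - GS t')" by simp
    show "\<exists>y\<in>X. \<forall>w\<in>X. G t \<bullet> y + H y / e t \<le> G t \<bullet> w + H w / e t"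
    proof (rule exist_min[OF X(2) X(1) _ sc _ c lsc])
      show "X \<noteq> {}" using p by auto
      show "e t > 0" using et eta_pos[OF t'] by simp
      fix w assume w: "w \<in> X"
      show "GS t' \<bullet> x t' + H (x t') / \<eta> t' + (G t - GS t') \<bullet> x t' - \<eta> t' * (dual_norm N (G t - GS t'))\<^sup>2 / 2
          \<le> G t \<bullet> w + H w / e t"
        using bdd_lemma[OF X(2) sc eta_pos[OF t'] norm x_in[OF t'] xmin[OF t'] w, of "G t - GS t'"]
        unfolding et by simp
    qed auto
  qed
  then obtain y where y: "\<And>t. t \<in> {1..Suc T} \<Longrightarrow> y t \<in> X"
    "\<And>t. t \<in> {1..Suc T} \<Longrightarrow> \<forall>w\<in>X. G t \<bullet> y t + H (y t) / e t \<le> G t \<bullet> w + H w / e t"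
    by (metis (no_types, lifting) bchoice[of "{1..Suc T}" "\<lambda>t y. y \<in> X \<and> (\<forall>w\<in>X. G t \<bullet> y + H y / e t \<le> G t \<bullet> w + H w / e t)"])
  define \<Phi> where "\<Phi> t = G t \<bullet> y t + H (y t) / e t" for t
  have step: "\<Phi> t + g t \<bullet> y t - \<eta> t * (dn (g t))\<^sup>2 / 2 \<le> \<Phi> (Suc t)" if t: "t \<in> {1..T}" for t
  proof -
    have t1: "t \<in> {1..Suc T}" "Suc t \<in> {1..Suc T}" using t by auto
    have et: "e t = \<eta> t" unfolding e_def using t by simp
    have GS: "G (Suc t) = G t + g t" unfolding G_def using t by (simp add: sum.atLeastLessThan_Suc)
    have le: "e (Suc t) \<le> e t" unfolding et e_def using t T by (intro eta_mono) auto
    have "H (y (Suc t)) / e t \<le> H (y (Suc t)) / e (Suc t)"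
      using le e_pos[of t] e_pos[of "Suc t"] t Hnn by (intro divide_left_mono) auto
    moreover have "\<Phi> t + g t \<bullet> y t - \<eta> t * (dn (g t))\<^sup>2 / 2 \<le> (G t + g t) \<bullet> y (Suc t) + H (y (Suc t)) / e t"
      using bdd_lemma[OF X(2) sc e_pos[of t] norm y(1)[OF t1(1)] y(2)[OF t1(1)] y(1)[OF t1(2)], of "g t"] t
      unfolding \<Phi>_def dn_def et by simp
    ultimately show ?thesis unfolding \<Phi>_def GS by simp
  qed
  have sumstep: "(\<Sum>t=1..T. g t \<bullet> y t - \<eta> t * (dn (g t))\<^sup>2 / 2) \<le> \<Phi> (Suc T) - \<Phi> 1"
  proof -
    have "(\<Sum>t=1..T. g t \<bullet> y t - \<eta> t * (dn (g t))\<^sup>2 / 2) \<le> (\<Sum>t=1..T. \<Phi> (Suc t) - \<Phi> t)"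
      by (rule sum_mono) (use step in force)
    also have "\<dots> = \<Phi> (Suc T) - \<Phi> 1" by (rule sum_Suc_diff) simp
    finally show ?thesis .
  qed
  have Phi1: "\<Phi> 1 \<ge> 0" unfolding \<Phi>_def G_def using Hnn e_pos[of 1] by simp
  have PhiT: "\<Phi> (Suc T) \<le> (\<Sum>t=1..T. g t \<bullet> p) + H p / \<eta> T"
  proof -
    have "\<Phi> (Suc T) \<le> G (Suc T) \<bullet> p + H p / e (Suc T)" unfolding \<Phi>_def using y(2)[of "Suc T"] p by auto
    moreover have "G (Suc T) \<bullet> p = (\<Sum>t=1..T. g t \<bullet> p)"
      unfolding G_def by (simp add: atLeastLessThanSuc_atLeastAtMost inner_sum_left)
    moreover have "e (Suc T) = \<eta> T" unfolding e_def by simp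
    ultimately show ?thesis by simp
  qed
  have stabt: "g t \<bullet> (x t - y t) \<le> \<eta> t * (dn (g t) * (\<Sum>s\<in>U t. dn (g s)))" if t: "t \<in> {1..T}" for t
  proof -
    have t1: "t \<in> {1..Suc T}" using t by auto
    have et: "e t = \<eta> t" unfolding e_def using t by simp
    have K: "D t \<bullet> v \<le> (\<Sum>s\<in>U t. dn (g s)) * N v" for v
      unfolding D_def inner_sum_left sum_distrib_right by (rule sum_mono) (rule dnb(1))
    have K0: "(\<Sum>s\<in>U t. dn (g s)) \<ge> 0" by (rule sum_nonneg) (rule dnb(2))
    have "N (x t - y t) \<le> \<eta> t * (\<Sum>s\<in>U t. dn (g s))"
      by (rule stab[OF X(2) sc eta_pos[OF t] norm x_in[OF t] xmin[OF t] y(1)[OF t1] _ K K0])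
        (use y(2)[OF t1] in \<open>simp add: GD[symmetric] et\<close>)
    then have "dn (g t) * N (x t - y t) \<le> dn (g t) * (\<eta> t * (\<Sum>s\<in>U t. dn (g s)))"
      using dnb(2) by (rule mult_left_mono)
    then show ?thesis using dnb(1)[of "g t" "x t - y t"] by (simp add: algebra_simps)
  qed
  define fx where "fx t = real_of_ereal (f t (x t))" for t
  define fp where "fp t = real_of_ereal (f t p)" for t
  have ffx: "f t (x t) = ereal (fx t)" "f t p = ereal (fp t)" "fx t - fp t \<le> g t \<bullet> (x t - p)"
    if t: "t \<in> {1..T}" for t
  proof -
    have gs: "\<bar>f t (x t)\<bar> \<noteq> \<infinity>" "\<And>w. f t (x t) + ereal (g t \<bullet> (w - x t)) \<le> f t w"
      using g_sub[OF t] unfolding subdiff_def by auto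
    have "subdiff (f t) p \<noteq> {}" using f_dom[OF t] p by auto
    then have fpf: "\<bar>f t p\<bar> \<noteq> \<infinity>" unfolding subdiff_def by auto
    show 1: "f t (x t) = ereal (fx t)" unfolding fx_def using gs(1) by (simp add: ereal_real')
    show 2: "f t p = ereal (fp t)" unfolding fp_def using fpf by (simp add: ereal_real')
    have "fx t + g t \<bullet> (p - x t) \<le> fp t" using gs(2)[of p] unfolding 1 2 by simp
    then show "fx t - fp t \<le> g t \<bullet> (x t - p)" by (simp add: inner_diff_right)
  qed
  have real_ineq: "(\<Sum>t=1..T. fx t) - (\<Sum>t=1..T. fp t) \<le> H p / \<eta> T
        + 1/2 * (\<Sum>t=1..T. \<eta> t * ((dn (g t))\<^sup>2 + 2 * dn (g t) * (\<Sum>s\<in>U t. dn (g s))))"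
  proof -
    have "(\<Sum>t=1..T. fx t) - (\<Sum>t=1..T. fp t) = (\<Sum>t=1..T. fx t - fp t)" by (simp add: sum_subtractf)
    also have "\<dots> \<le> (\<Sum>t=1..T. g t \<bullet> (x t - p))" by (rule sum_mono) (use ffx in blast)
    also have "\<dots> = (\<Sum>t=1..T. g t \<bullet> (x t - y t)) + (\<Sum>t=1..T. g t \<bullet> y t) - (\<Sum>t=1..T. g t \<bullet> p)"
      by (simp add: inner_diff_right sum_subtractf sum.distrib)
    also have "\<dots> \<le> (\<Sum>t=1..T. \<eta> t * (dn (g t) * (\<Sum>s\<in>U t. dn (g s)))) + (H p / \<eta> T + (\<Sum>t=1..T. \<eta> t * (dn (g t))\<^sup>2 / 2))"
    proof -
      have a: "(\<Sum>t=1..T. g t \<bullet> (x t - y t)) \<le> (\<Sum>t=1..T. \<eta> t * (dn (g t) * (\<Sum>s\<in>U t. dn (g s))))"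
        by (rule sum_mono) (use stabt in blast)
      have b: "(\<Sum>t=1..T. g t \<bullet> y t) - (\<Sum>t=1..T. \<eta> t * (dn (g t))\<^sup>2 / 2) \<le> \<Phi> (Suc T) - \<Phi> 1"
        using sumstep by (simp add: sum_subtractf)
      show ?thesis using a b Phi1 PhiT by linarith
    qed
    also have "\<dots> = H p / \<eta> T
        + 1/2 * (\<Sum>t=1..T. \<eta> t * ((dn (g t))\<^sup>2 + 2 * dn (g t) * (\<Sum>s\<in>U t. dn (g s))))"
    proof -
      have "1/2 * (\<Sum>t=1..T. \<eta> t * ((dn (g t))\<^sup>2 + 2 * dn (g t) * (\<Sum>s\<in>U t. dn (g s))))
          = (\<Sum>t=1..T. 1/2 * (\<eta> t * ((dn (g t))\<^sup>2 + 2 * dn (g t) * (\<Sum>s\<in>U t. dn (g s)))))"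
        by (rule sum_distrib_left)
      also have "\<dots> = (\<Sum>t=1..T. \<eta> t * (dn (g t) * (\<Sum>s\<in>U t. dn (g s))) + \<eta> t * (dn (g t))\<^sup>2 / 2)"
        by (rule sum.cong) (simp_all add: algebra_simps)
      also have "\<dots> = (\<Sum>t=1..T. \<eta> t * (dn (g t) * (\<Sum>s\<in>U t. dn (g s)))) + (\<Sum>t=1..T. \<eta> t * (dn (g t))\<^sup>2 / 2)"
        by (rule sum.distrib)
      finally show ?thesis by linarith
    qed
    finally show ?thesis .
  qed
  have lhs: "(\<Sum>t=1..T. f t (x t)) - (\<Sum>t=1..T. f t p) = ereal ((\<Sum>t=1..T. fx t) - (\<Sum>t=1..T. fp t))"
  proof -
    have "(\<Sum>t=1..T. f t (x t)) = (\<Sum>t=1..T. ereal (fx t))" by (rule sum.cong) (use ffx in auto)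
    moreover have "(\<Sum>t=1..T. f t p) = (\<Sum>t=1..T. ereal (fp t))" by (rule sum.cong) (use ffx in auto)
    ultimately show ?thesis by simp
  qed
  have hp: "h p / ereal (\<eta> T) = ereal (H p / \<eta> T)" using hH[OF p] eta_pos[of T] T by simp
  have fin: "ereal ((\<Sum>t=1..T. fx t) - (\<Sum>t=1..T. fp t)) \<le> ereal (H p / \<eta> T)
        + ereal (1/2 * (\<Sum>t=1..T. \<eta> t * ((dn (g t))\<^sup>2 + 2 * dn (g t) * (\<Sum>s\<in>U t. dn (g s)))))"
    using real_ineq by (simp only: plus_ereal.simps(1) ereal_less_eq(3))
  show ?thesis using fin unfolding lhs hp dn_def U_def .
qed
end
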